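(* Let $m>1$, $d\in\{2,3,\ldots\}$, consider a Galton–Watson process with offspring distribution supported in $\{0,\ldots,d\}$ with mean $m$, and set $a=\frac{8m}{m-1}$. Then for every positive integer $r$ and every $n\in\mathbb{N}$, \[ \mathbb{P}(W_n>5adr)\le e^{-(\log 3-1)r}+e^{-\frac23 r}. \]
   Context: $(Z_n)_{n\ge 0}$ is a Galton–Watson process with $Z_0=1$, $Z_{n+1}=\sum_{i=1}^{Z_n}\xi_{n,i}$ with $(\xi_{n,i})$ i.i.d. distributed as $Z_1$, $m=\mathbb{E}[Z_1]$, and $W_n=Z_n/m^n$. *)

theory Defs
  imports "HOL-Probability.Probability"
begin

fun iid_sum_pmf :: "nat pmf \<Rightarrow> nat \<Rightarrow> nat pmf" where
  "iid_sum_pmf p 0 = return_pmf 0"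
| "iid_sum_pmf p (Suc k) = bind_pmf (iid_sum_pmf p k) (\<lambda>s. map_pmf (\<lambda>x. s + x) p)"

text \<open>Law of the generation size Z_n of a Galton-Watson process with Z_0 = 1 and
  offspring law p: Z_(n+1) is the sum of Z_n i.i.d. copies of the offspring variable.\<close>
fun gw_pmf :: "nat pmf \<Rightarrow> nat \<Rightarrow> nat pmf" where
  "gw_pmf p 0 = return_pmf 1"
| "gw_pmf p (Suc n) = bind_pmf (gw_pmf p n) (iid_sum_pmf p)"

definition offspring_mean :: "nat pmf \<Rightarrow> real" where
  "offspring_mean p = measure_pmf.expectation p real"

end

theory Submission
  imports Defs
begin

definition gf :: "nat pmf \<Rightarrow> real \<Rightarrow> real" where
  "gf p s = measure_pmf.expectation p (\<lambda>x. s ^ x)"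

lemma iid_nn:
  assumes "0 \<le> s"
  shows "(\<integral>\<^sup>+z. ennreal (s ^ z) \<partial>iid_sum_pmf p k) = (\<integral>\<^sup>+x. ennreal (s ^ x) \<partial>p) ^ k"
proof (induction k)
  case 0
  then show ?case by simp
next
  case (Suc k)
  have "(\<integral>\<^sup>+z. ennreal (s ^ z) \<partial>iid_sum_pmf p (Suc k))
      = (\<integral>\<^sup>+a. \<integral>\<^sup>+x. ennreal (s ^ a) * ennreal (s ^ x) \<partial>p \<partial>iid_sum_pmf p k)"
    using assms by (simp add: power_add ennreal_mult)
  also have "\<dots> = (\<integral>\<^sup>+a. ennreal (s ^ a) * (\<integral>\<^sup>+x. ennreal (s ^ x) \<partial>p) \<partial>iid_sum_pmf p k)"
    by (simp add: nn_integral_cmult)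
  also have "\<dots> = (\<integral>\<^sup>+a. ennreal (s ^ a) \<partial>iid_sum_pmf p k) * (\<integral>\<^sup>+x. ennreal (s ^ x) \<partial>p)"
    by (simp add: nn_integral_multc)
  finally show ?case using Suc by (simp add: mult.commute)
qed

lemma gf_nn:
  assumes "finite (set_pmf p)" "0 \<le> s"
  shows "(\<integral>\<^sup>+x. ennreal (s ^ x) \<partial>p) = ennreal (gf p s)"
  unfolding gf_def using assms
  by (intro nn_integral_eq_integral integrable_measure_pmf_finite) auto

lemma gf_nonneg: "0 \<le> s \<Longrightarrow> 0 \<le> gf p s"
  unfolding gf_def by (intro integral_nonneg_AE) auto

lemma gf_funpow_nonneg: "0 \<le> s \<Longrightarrow> 0 \<le> (gf p ^^ n) s"
  by (induction n) (auto intro: gf_nonneg)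

lemma gw_nn:
  assumes "finite (set_pmf p)" "0 \<le> s"
  shows "(\<integral>\<^sup>+z. ennreal (s ^ z) \<partial>gw_pmf p n) = ennreal ((gf p ^^ n) s)"
  using assms(2)
proof (induction n arbitrary: s)
  case 0
  then show ?case by simp
next
  case (Suc n)
  have "(\<integral>\<^sup>+z. ennreal (s ^ z) \<partial>gw_pmf p (Suc n))
     = (\<integral>\<^sup>+a. (\<integral>\<^sup>+z. ennreal (s ^ z) \<partial>iid_sum_pmf p a) \<partial>gw_pmf p n)" by simp
  also have "\<dots> = (\<integral>\<^sup>+a. ennreal (gf p s ^ a) \<partial>gw_pmf p n)"
    using Suc.prems assms(1) by (simp add: iid_nn gf_nn ennreal_power gf_nonneg)
  also have "\<dots> = ennreal ((gf p ^^ n) (gf p s))"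
    using Suc.IH[of "gf p s"] Suc.prems gf_nonneg by blast
  also have "\<dots> = ennreal ((gf p ^^ Suc n) s)"
    by (simp only: funpow_Suc_right comp_def)
  finally show ?case .
qed


lemma gf_exp_bound:
  assumes sp: "set_pmf p \<subseteq> {0..d}" and u: "0 \<le> u" "u * d \<le> 1"
  shows "gf p (exp u) \<le> exp (offspring_mean p * u + d * offspring_mean p * u^2)"
proof -
  have fin: "finite (set_pmf p)" using sp finite_subset by blast
  have ptw: "exp u ^ x \<le> 1 + u * real x + u^2 * d * real x" if "x \<in> set_pmf p" for x
  proof -
    have xd: "real x \<le> d" using that sp by auto
    have "u * real x \<le> 1" using u xd by (meson mult_left_mono order_trans)
    moreover have "0 \<le> u * real x" using u by simp
    ultimately have "exp (u * real x) \<le> 1 + u * real x + (u * real x)^2" by (intro exp_bound)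
    also have "(u * real x)^2 \<le> u^2 * d * real x"
    proof -
      have "real x * real x \<le> real d * real x" using xd by (intro mult_right_mono) auto
      then have "u * u * (real x * real x) \<le> u * u * (real d * real x)"
        using u by (intro mult_left_mono) auto
      then show ?thesis by (simp add: power2_eq_square algebra_simps)
    qed
    finally have "exp (u * real x) \<le> 1 + u * real x + u^2 * d * real x" by simp
    moreover have "exp u ^ x = exp (u * real x)"
      by (metis exp_of_nat_mult mult.commute)
    ultimately show ?thesis by simp
  qed
  have "gf p (exp u) \<le> measure_pmf.expectation p (\<lambda>x. 1 + u * real x + u^2 * d * real x)"
    unfolding gf_def using fin ptw
    by (intro integral_mono_AE integrable_measure_pmf_finite) (auto simp: AE_measure_pmf_iff)
  also have "\<dots> = 1 + u * offspring_mean p + u^2 * d * offspring_mean p"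
    unfolding offspring_mean_def using fin
    by (simp add: integrable_measure_pmf_finite)
  also have "\<dots> \<le> exp (offspring_mean p * u + d * offspring_mean p * u^2)"
    using exp_ge_add_one_self[of "offspring_mean p * u + d * offspring_mean p * u^2"]
    by (simp add: algebra_simps)
  finally show ?thesis .
qed

lemma gf_mono:
  assumes "finite (set_pmf p)" "0 \<le> s" "s \<le> t"
  shows "gf p s \<le> gf p t"
  unfolding gf_def using assms
  by (intro integral_mono integrable_measure_pmf_finite) (auto intro: power_mono)


lemma arith_step:
  fixes m d K t :: real
  assumes m: "m > 1" and d: "d > 0" and K: "K * (m - 1) = 4 * d" and t: "0 \<le> t" "K * t \<le> 1"
  shows "m * (t + K * t^2) + d * m * (t + K * t^2)^2 \<le> m * t + K * (m * t)^2"
proof -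
  have "(K * t) * t \<le> 1 * t" by (rule mult_right_mono[OF t(2) t(1)])
  then have u2: "t + K * t^2 \<le> 2 * t" by (simp add: power2_eq_square mult.assoc)
  have "0 \<le> t + K * t^2" using t K m d
    by (metis add_nonneg_nonneg mult_nonneg_nonneg zero_le_power2 le_less_trans order.strict_implies_order
        diff_gt_0_iff_gt zero_less_mult_pos2 zero_less_numeral mult_pos_pos)
  then have "(t + K * t^2)^2 \<le> (2*t)^2" using u2 by (intro power_mono) auto
  then have "d * m * (t + K * t^2)^2 \<le> d * m * (4 * t^2)" using d m by (intro mult_left_mono) (auto simp: power2_eq_square)
  moreover have "4 * d * m * t^2 = K * (m - 1) * m * t^2" using K by simp
  ultimately show ?thesis
    by (simp add: power2_eq_square algebra_simps)
qed


lemma phi_bound: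
  assumes sp: "set_pmf p \<subseteq> {0..d}" and mdef: "m = offspring_mean p" and m: "m > 1"
    and d: "d \<ge> 1" and K: "K * (m - 1) = 4 * real d"
  shows "0 \<le> \<theta> \<Longrightarrow> K * \<theta> \<le> 1 \<Longrightarrow> (gf p ^^ n) (exp (\<theta> / m ^ n)) \<le> exp (\<theta> * (1 + K * \<theta>))"
proof (induction n arbitrary: \<theta>)
  case 0
  have "0 < K * (m - 1)" using K d by simp
  then have K0: "K > 0" using m by (simp add: zero_less_mult_iff)
  then show ?case using 0 by (simp add: algebra_simps)
next
  case (Suc n)
  have "0 < K * (m - 1)" using K d by simp
  then have K0: "K > 0" using m by (simp add: zero_less_mult_iff)
  define t where "t = \<theta> / m"
  have t0: "0 \<le> t" using Suc.prems m by (simp add: t_def)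
  have "\<theta> * 1 \<le> \<theta> * m" using Suc.prems m by (intro mult_left_mono) auto
  then have tle: "t \<le> \<theta>" using m by (simp add: t_def field_simps)
  have "K * t \<le> K * \<theta>" using tle K0 by (intro mult_left_mono) auto
  then have Kt: "K * t \<le> 1" using Suc.prems(2) by simp
  have fin: "finite (set_pmf p)" using sp finite_subset by blast
  define A where "A = (gf p ^^ n) (exp (t / m ^ n))"
  have eq: "(gf p ^^ Suc n) (exp (\<theta> / m ^ Suc n)) = gf p A"
    unfolding A_def t_def by (simp add: field_simps)
  have A: "A \<le> exp (t * (1 + K * t))" using Suc.IH[OF t0 Kt] by (simp add: A_def)
  have A0: "0 \<le> A" unfolding A_def by (intro gf_funpow_nonneg) simp
  define u where "u = t + K * t^2"
  have u0: "0 \<le> u" using t0 K0 by (simp add: u_def)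
  have "(K * t) * t \<le> 1 * t" by (rule mult_right_mono[OF Kt t0])
  then have u2: "u \<le> 2 * t" by (simp add: u_def power2_eq_square mult.assoc)
  have "(\<theta> * K) * (m - 1) \<le> 1 * (m - 1)" using Suc.prems m by (intro mult_right_mono) (auto simp: mult.commute)
  then have "\<theta> * (4 * d) \<le> m - 1" using K by (simp add: mult.assoc)
  then have "2 * t * d \<le> 1" using m t0 unfolding t_def by (simp add: field_simps)
  moreover have "u * d \<le> 2 * t * d" using u2 by (intro mult_right_mono) auto
  ultimately have ud: "u * d \<le> 1" by linarith
  have "exp (t * (1 + K * t)) = exp u" by (simp add: u_def power2_eq_square algebra_simps)
  then have "gf p A \<le> gf p (exp u)" using A A0 fin by (intro gf_mono) auto
  also have "\<dots> \<le> exp (m * u + d * m * u^2)" using gf_exp_bound[OF sp u0 ud] mdef by simp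
  also have "\<dots> \<le> exp (\<theta> * (1 + K * \<theta>))"
  proof -
    have "m * u + d * m * u^2 \<le> m * t + K * (m * t)^2"
      unfolding u_def using arith_step[OF m _ K t0 Kt] d by simp
    also have "m * t = \<theta>" using m by (simp add: t_def)
    finally show ?thesis by (simp add: power2_eq_square algebra_simps)
  qed
  finally show ?case using eq by simp
qed


theorem mainTheorem5:
  fixes p :: "nat pmf" and d :: nat and m a :: real
  assumes "d \<ge> 2"
    and "set_pmf p \<subseteq> {0..d}"
    and "m = offspring_mean p"
    and "m > 1"
    and "a = 8 * m / (m - 1)"
  shows "\<forall>r::nat. r > 0 \<longrightarrow> (\<forall>n::nat.
           measure_pmf.prob (gw_pmf p n) {z. real z / m ^ n > 5 * a * real d * real r}
             \<le> exp (-(ln 3 - 1) * real r) + exp (-(2/3) * real r))"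
proof (intro allI impI)
  fix r n :: nat
  assume r: "r > 0"
  note d = assms(1) and sp = assms(2) and mdef = assms(3) and m = assms(4) and adef = assms(5)
  have fin: "finite (set_pmf p)" using sp finite_subset by blast
  define K where "K = 4 * real d / (m - 1)"
  define \<theta> where "\<theta> = (m - 1) / (4 * real d)"
  define x where "x = 5 * a * real d * real r"
  define s where "s = exp (\<theta> / m ^ n)"
  define A where "A = {z. real z / m ^ n > x}"
  have dpos: "real d > 0" using d by simp
  have KK: "K * (m - 1) = 4 * real d" using m by (simp add: K_def)
  have th0: "0 \<le> \<theta>" using m by (simp add: \<theta>_def)
  have Kth: "K * \<theta> = 1" using m dpos by (simp add: K_def \<theta>_def)
  have phi: "(gf p ^^ n) s \<le> exp (\<theta> * (1 + K * \<theta>))"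
    unfolding s_def using phi_bound[OF sp mdef m _ KK th0] d Kth by simp
  have ind: "indicator A z \<le> ennreal (exp (-\<theta> * x) * s ^ z)" for z
  proof (cases "z \<in> A")
    case True
    have "s ^ z = exp (\<theta> * (real z / m ^ n))" unfolding s_def
      by (metis exp_of_nat_mult times_divide_eq_right mult.commute)
    then have "exp (-\<theta> * x) * s ^ z = exp (\<theta> * (real z / m ^ n - x))"
      by (simp add: exp_add[symmetric] algebra_simps)
    moreover have "0 \<le> \<theta> * (real z / m ^ n - x)" using True th0 by (simp add: A_def)
    ultimately have "1 \<le> exp (-\<theta> * x) * s ^ z" by simp
    then show ?thesis using True by simp
  next
    case False
    then show ?thesis by simp
  qed
  have "emeasure (measure_pmf (gw_pmf p n)) A = (\<integral>\<^sup>+z. indicator A z \<partial>gw_pmf p n)"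
    by simp
  also have "\<dots> \<le> (\<integral>\<^sup>+z. ennreal (exp (-\<theta> * x)) * ennreal (s ^ z) \<partial>gw_pmf p n)"
    using ind by (intro nn_integral_mono) (simp add: ennreal_mult s_def)
  also have "\<dots> = ennreal (exp (-\<theta> * x)) * ennreal ((gf p ^^ n) s)"
    by (simp add: nn_integral_cmult gw_nn[OF fin] s_def)
  also have "\<dots> = ennreal (exp (-\<theta> * x) * (gf p ^^ n) s)"
    by (simp add: ennreal_mult gf_funpow_nonneg s_def)
  finally have P0: "ennreal (measure_pmf.prob (gw_pmf p n) A) \<le> ennreal (exp (-\<theta> * x) * (gf p ^^ n) s)"
    by (simp add: measure_pmf.emeasure_eq_measure)
  have "0 \<le> exp (-\<theta> * x) * (gf p ^^ n) s" by (simp add: gf_funpow_nonneg s_def)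
  then have P: "measure_pmf.prob (gw_pmf p n) A \<le> exp (-\<theta> * x) * (gf p ^^ n) s"
    using P0 ennreal_le_iff by blast
  note P
  also have "\<dots> \<le> exp (-\<theta> * x) * exp (\<theta> * (1 + K * \<theta>))"
    using phi by (intro mult_left_mono) auto
  also have "\<dots> = exp (2 * \<theta> - \<theta> * x)" using Kth by (simp add: exp_add[symmetric] algebra_simps)
  also have "\<dots> \<le> exp (-(ln 3 - 1) * real r)"
  proof -
    have tx: "\<theta> * x = 10 * m * real r"
      using m dpos by (simp add: \<theta>_def x_def adef field_simps)
    have "2 * \<theta> \<le> m / 4"
    proof -
      have "(m - 1) / (2 * real d) \<le> (m - 1) / 4"
        using m d by (intro divide_left_mono) auto
      moreover have "2 * \<theta> = (m - 1) / (2 * real d)" using dpos by (simp add: \<theta>_def field_simps)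
      ultimately show ?thesis by simp
    qed
    moreover have l3: "ln (3::real) \<le> 2" using ln_le_minus_one[of 3] by simp
    have f1: "m * 1 \<le> m * real r" using r m by (intro mult_left_mono) auto
    have f2: "ln 3 * real r \<le> 2 * real r" using l3 by (intro mult_right_mono) auto
    have f3: "1 * real r \<le> m * real r" using r m by (intro mult_right_mono) auto
    have tx': "\<theta> * x = 10 * (m * real r)" using tx by simp
    ultimately have "2 * \<theta> - \<theta> * x \<le> real r - ln 3 * real r" using tx' f1 f2 f3 by linarith
    then have "2 * \<theta> - \<theta> * x \<le> -(ln 3 - 1) * real r" by (simp add: algebra_simps)
    then show ?thesis by simp
  qed
  also have "\<dots> \<le> exp (-(ln 3 - 1) * real r) + exp (-(2/3) * real r)" by simp
  finally show "measure_pmf.prob (gw_pmf p n) {z. real z / m ^ n > 5 * a * real d * real r}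
             \<le> exp (-(ln 3 - 1) * real r) + exp (-(2/3) * real r)"
    by (simp add: A_def x_def)
qed

end
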